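(* Let $\mathfrak g$, $m$, $\mathbb C(y)$, $a_i(n)$ and the maps $r_i$ ($i\in S$) be as in the context, and put $X^i_n:=a_i(n)^{-1}$. Let $\mathbf Y_{\chi_\varepsilon}\subset\mathbb C(y)$ be the intersection over $i\in S$ of the subrings generated by $\{y_j(n)^{\pm1}: j\ne i,\ n\in d\mathbb Z/d'm\mathbb Z\}$ together with $\{y_i(n)(1+X^i_n): n\in d\mathbb Z/d'm\mathbb Z\}$ (the image of the $q$-character at a root of unity $q$ with $q^{2d'm}=1$). Then $\mathbf Y_{\chi_\varepsilon}$ is invariant under the action of $W(\mathfrak g)$ generated by the $r_i$: $r_i(f)=f$ for all $f\in\mathbf Y_{\chi_\varepsilon}$ and all $i\in S$.
   Context: Let $\mathfrak g$ be a finite-dimensional complex simple Lie algebra of rank $\ell$, $S=\{1,\dots,\ell\}$, of type $A_\ell$, $B_\ell$, $C_\ell$, $D_\ell$ ($\ell\ge4$), $E_{6,7,8}$, $F_4$ or $G_2$, labelled: $A_\ell,B_\ell,C_\ell$ chain $1-\cdots-\ell$ ($\alpha_\ell$ short in $B_\ell$, long in $C_\ell$); $D_\ell$: chain $1-\cdots-(\ell-1)$ plus edge $(\ell-2)-\ell$; $E_\ell$: chain $1-2-3-5-\cdots-\ell$ plus edge $3-4$; $F_4$: chain $1-2-3-4$, $\alpha_1,\alpha_2$ long; $G_2$: $\alpha_2$ long. $d_i=(\alpha_i,\alpha_i)/2$: $1$ in types $A,D,E$; $(1,\dots,1,\frac12)$ for $B_\ell$; $(1,\dots,1,2)$ for $C_\ell$;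 $(1,1,\frac12,\frac12)$ for $F_4$; $(1,3)$ for $G_2$; $d=\min d_i$, $d'=\max d_i$. Let $m$ be an integer, $m>1$, $m>\ell-1$. Quiver $Q_m(\mathfrak g)$ on $\{v^i_n: i\in S, n\in d\mathbb Z/d'm\mathbb Z\}$ with arrows (indices mod $d'm$): (simply-laced) orient Dynkin edges from larger to smaller label ($C(\mathfrak g)$); $v^i_n\to v^i_{n+1}$, and for each $i\to j$ in $C(\mathfrak g)$, $v^i_n\to v^j_n$ and $v^j_{n+1}\to v^i_n$. ($B_\ell$) $v^i_n\to v^i_{n+1}$ ($i\le\ell-1$); $v^i_n\to v^{i-1}_n$, $v^{i-1}_{n+1}\to v^i_n$ ($2\le i\le\ell-1$); $v^\ell_n\to v^\ell_{n+1/2}$, $v^\ell_n\to v^{\ell-1}_{n-1/2}$, $v^{\ell-1}_{n+1/2}\to v^\ell_n$. ($C_\ell$) $v^i_n\to v^i_{n+1}$ ($i\le\ell-1$); $v^i_n\to v^{i-1}_n$, $v^{i-1}_{n+1}\to v^i_n$ ($2\le i\le\ell-1$); $v^\ell_n\to v^\ell_{n+2}$, $v^\ell_n\to v^{\ell-1}_n$, $v^{\ell-1}_{n+2}\to v^\ell_n$. ($F_4$) $v^i_n\to v^i_{n+1}$ ($i=1,2$); $v^2_n\to v^1_n$, $v^1_{n+1}\to v^2_n$; $v^3_n\to v^3_{n+1/2}$, $v^3_n\to v^2_{n-1/2}$, $v^2_{n+1/2}\to v^3_n$; $v^4_n\to v^4_{n+1/2}$, $v^4_n\to v^3_n$, $v^3_{n+1/2}\to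 v^4_n$. ($G_2$) $v^1_n\to v^1_{n+1}$, $v^2_n\to v^2_{n+3}$, $v^2_n\to v^1_n$, $v^1_{n+3}\to v^2_n$. $\mathbb C(y)$ is the field of rational functions in $y_i(n)$, $i\in S$, $n\in d\mathbb Z/d'm\mathbb Z$; $a_i(n)=y_i(n)y_i(n+d_i)/F(i,n)$ with $F(i,n)=\prod_{j:\,v^i_n\to v^j_n}y_j(n+d_j)\prod_{j:\,v^j_n\to v^i_n}y_j(n)$, except $F(i,n)=y_{i-1}(n+\frac12)y_{i+1}(n)$ for $i=\ell$ in $B_\ell$ and $i=3$ in $F_4$; $F(i,n)=y_{i-1}(n+1)y_{i+1}(n)y_{i+1}(n+\frac12)$ for $i=\ell-1$ in $B_\ell$ and $i=2$ in $F_4$; $F(\ell,n)=y_{\ell-1}(n+1)y_{\ell-1}(n+2)$ in $C_\ell$; $F(2,n)=y_1(n+1)y_1(n+2)y_1(n+3)$ in $G_2$; with $y_0:=y_{\ell+1}:=1$. $f_y(i,n)=1+\sum_{k=0}^{d'm/d_i-2}(a_i(n)a_i(n-d_i)\cdots a_i(n-kd_i))^{-1}$, and $r_i$ is the field endomorphism of $\mathbb C(y)$ with $r_i(y_i(n))=\frac{f_y(i,n-2d_i)}{f_y(i,n-d_i)}\frac{F(i,n-d_i)}{y_i(n-d_i)}$, $r_i(y_j(n))=y_j(n)$ for $j\ne i$. These $r_i$ generate an action of the Weyl group $W(\mathfrak g)$ on $\mathbb C(y)$. *)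

theory Defs
  imports Complex_Main "HOL-Library.Poly_Mapping" "HOL-Library.Product_Lexorder"
    "HOL-Computational_Algebra.Fraction_Field"
begin

datatype ctype = TA nat | TB nat | TC nat | TD nat | TE nat | TF4 | TG2

fun rank :: "ctype \<Rightarrow> nat" where
  "rank (TA l) = l" | "rank (TB l) = l" | "rank (TC l) = l" | "rank (TD l) = l"
| "rank (TE l) = l" | "rank TF4 = 4" | "rank TG2 = 2"

fun valid :: "ctype \<Rightarrow> bool" where
  "valid (TA l) = (l \<ge> 1)" | "valid (TB l) = (l \<ge> 2)" | "valid (TC l) = (l \<ge> 2)"
| "valid (TD l) = (l \<ge> 4)" | "valid (TE l) = (l \<in> {6,7,8})"
| "valid TF4 = True" | "valid TG2 = True"

definition Sset :: "ctype \<Rightarrow> nat set" where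
  "Sset g = {1..rank g}"

fun di :: "ctype \<Rightarrow> nat \<Rightarrow> rat" where
  "di (TB l) i = (if i = l then 1/2 else 1)"
| "di (TC l) i = (if i = l then 2 else 1)"
| "di TF4 i = (if i \<le> 2 then 1 else 1/2)"
| "di TG2 i = (if i = 2 then 3 else 1)"
| "di _ i = 1"

definition dmin :: "ctype \<Rightarrow> rat" where
  "dmin g = Min (di g ` Sset g)"

definition dmax :: "ctype \<Rightarrow> rat" where
  "dmax g = Max (di g ` Sset g)"

text \<open>The index set d Z (all representatives; indices are taken modulo d' m).\<close>
definition dpts :: "ctype \<Rightarrow> rat set" where
  "dpts g = {n. \<exists>k::int. n = of_int k * dmin g}"

definition cong_dm :: "ctype \<Rightarrow> nat \<Rightarrow> rat \<Rightarrow> rat \<Rightarrow> bool" where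
  "cong_dm g m a b = (\<exists>k::int. a - b = of_int k * (dmax g * of_nat m))"

fun dedge :: "ctype \<Rightarrow> nat \<Rightarrow> nat \<Rightarrow> bool" where
  "dedge (TA l) i j = (i \<in> {1..l} \<and> j \<in> {1..l} \<and> (i = j + 1 \<or> j = i + 1))"
| "dedge (TD l) i j =
     ((i \<in> {1..l-1} \<and> j \<in> {1..l-1} \<and> (i = j + 1 \<or> j = i + 1))
      \<or> (i = l - 2 \<and> j = l) \<or> (i = l \<and> j = l - 2))"
| "dedge (TE l) i j =
     (let e = (\<lambda>a b. (a = 1 \<and> b = 2) \<or> (a = 2 \<and> b = 3) \<or> (a = 3 \<and> b = 5)
                    \<or> (a = 3 \<and> b = 4) \<or> (5 \<le> a \<and> b = a + 1 \<and> b \<le> l))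
      in e i j \<or> e j i)"
| "dedge _ i j = False"

definition carrow :: "ctype \<Rightarrow> nat \<Rightarrow> nat \<Rightarrow> bool" where
  "carrow g i j = (dedge g i j \<and> i > j)"

text \<open>Raw arrows of the quiver with exact (unreduced) second indices:
  qarrow g (i,n) (j,n') means v^i_n \<rightarrow> v^j_n'.\<close>
fun qarrow :: "ctype \<Rightarrow> nat \<times> rat \<Rightarrow> nat \<times> rat \<Rightarrow> bool" where
  "qarrow (TB l) (i, n) (j, n') =
     ((1 \<le> i \<and> i \<le> l - 1 \<and> j = i \<and> n' = n + 1)
    \<or> (2 \<le> i \<and> i \<le> l - 1 \<and> j = i - 1 \<and> n' = n)
    \<or> (2 \<le> j \<and> j \<le> l - 1 \<and> i = j - 1 \<and> n = n' + 1)
    \<or> (i = l \<and> j = l \<and> n' = n + 1/2)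
    \<or> (i = l \<and> j = l - 1 \<and> n' = n - 1/2)
    \<or> (i = l - 1 \<and> j = l \<and> n = n' + 1/2))"
| "qarrow (TC l) (i, n) (j, n') =
     ((1 \<le> i \<and> i \<le> l - 1 \<and> j = i \<and> n' = n + 1)
    \<or> (2 \<le> i \<and> i \<le> l - 1 \<and> j = i - 1 \<and> n' = n)
    \<or> (2 \<le> j \<and> j \<le> l - 1 \<and> i = j - 1 \<and> n = n' + 1)
    \<or> (i = l \<and> j = l \<and> n' = n + 2)
    \<or> (i = l \<and> j = l - 1 \<and> n' = n)
    \<or> (i = l - 1 \<and> j = l \<and> n = n' + 2))"
| "qarrow TF4 (i, n) (j, n') =
     ((i \<in> {1,2} \<and> j = i \<and> n' = n + 1)
    \<or> (i = 2 \<and> j = 1 \<and> n' = n)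
    \<or> (i = 1 \<and> j = 2 \<and> n = n' + 1)
    \<or> (i = 3 \<and> j = 3 \<and> n' = n + 1/2)
    \<or> (i = 3 \<and> j = 2 \<and> n' = n - 1/2)
    \<or> (i = 2 \<and> j = 3 \<and> n = n' + 1/2)
    \<or> (i = 4 \<and> j = 4 \<and> n' = n + 1/2)
    \<or> (i = 4 \<and> j = 3 \<and> n' = n)
    \<or> (i = 3 \<and> j = 4 \<and> n = n' + 1/2))"
| "qarrow TG2 (i, n) (j, n') =
     ((i = 1 \<and> j = 1 \<and> n' = n + 1)
    \<or> (i = 2 \<and> j = 2 \<and> n' = n + 3)
    \<or> (i = 2 \<and> j = 1 \<and> n' = n)
    \<or> (i = 1 \<and> j = 2 \<and> n = n' + 3))"
| "qarrow g (i, n) (j, n') =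
     ((i \<in> Sset g \<and> j = i \<and> n' = n + 1)
    \<or> (carrow g i j \<and> n' = n)
    \<or> (carrow g j i \<and> n = n' + 1))"

definition Qarrow :: "ctype \<Rightarrow> nat \<Rightarrow> nat \<times> rat \<Rightarrow> nat \<times> rat \<Rightarrow> bool" where
  "Qarrow g m v w =
     (fst v \<in> Sset g \<and> fst w \<in> Sset g \<and> snd v \<in> dpts g \<and> snd w \<in> dpts g
      \<and> (\<exists>n''. qarrow g v (fst w, n'') \<and> cong_dm g m n'' (snd w)))"

text \<open>C(y) is realised inside the fraction field of the polynomial ring over C in
  indeterminates indexed by nat \<times> nat; y_i(n) is the indeterminate (i, k) where
  n = k d with k reduced modulo d'm/d.\<close>

type_synonym cpoly = "((nat \<times> nat) \<Rightarrow>\<^sub>0 nat) \<Rightarrow>\<^sub>0 complex"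
type_synonym cy = "cpoly fract"

definition const :: "complex \<Rightarrow> cy" where
  "const c = Fract (Poly_Mapping.single 0 c) 1"

definition npts :: "ctype \<Rightarrow> nat \<Rightarrow> int" where
  "npts g m = \<lfloor>dmax g * of_nat m / dmin g\<rfloor>"

definition Y :: "ctype \<Rightarrow> nat \<Rightarrow> nat \<Rightarrow> rat \<Rightarrow> cy" where
  "Y g m i n = Fract (Poly_Mapping.single
       (Poly_Mapping.single (i, nat (\<lfloor>n / dmin g\<rfloor> mod npts g m)) 1) 1) 1"

text \<open>y_i(n) with the convention y_0 = y_(l+1) = 1.\<close>
definition Y0 :: "ctype \<Rightarrow> nat \<Rightarrow> nat \<Rightarrow> rat \<Rightarrow> cy" where
  "Y0 g m i n = (if i \<in> Sset g then Y g m i n else 1)"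

definition Fgen :: "ctype \<Rightarrow> nat \<Rightarrow> nat \<Rightarrow> rat \<Rightarrow> cy" where
  "Fgen g m i n =
     (\<Prod>j\<in>{j\<in>Sset g. Qarrow g m (i, n) (j, n)}. Y g m j (n + di g j))
   * (\<Prod>j\<in>{j\<in>Sset g. Qarrow g m (j, n) (i, n)}. Y g m j n)"

fun Fy :: "ctype \<Rightarrow> nat \<Rightarrow> nat \<Rightarrow> rat \<Rightarrow> cy" where
  "Fy (TB l) m i n =
     (if i = l then Y0 (TB l) m (i - 1) (n + 1/2) * Y0 (TB l) m (i + 1) n
      else if i = l - 1 then Y0 (TB l) m (i - 1) (n + 1) * Y0 (TB l) m (i + 1) n
                              * Y0 (TB l) m (i + 1) (n + 1/2)
      else Fgen (TB l) m i n)"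
| "Fy TF4 m i n =
     (if i = 3 then Y0 TF4 m (i - 1) (n + 1/2) * Y0 TF4 m (i + 1) n
      else if i = 2 then Y0 TF4 m (i - 1) (n + 1) * Y0 TF4 m (i + 1) n
                              * Y0 TF4 m (i + 1) (n + 1/2)
      else Fgen TF4 m i n)"
| "Fy (TC l) m i n =
     (if i = l then Y0 (TC l) m (l - 1) (n + 1) * Y0 (TC l) m (l - 1) (n + 2)
      else Fgen (TC l) m i n)"
| "Fy TG2 m i n =
     (if i = 2 then Y TG2 m 1 (n + 1) * Y TG2 m 1 (n + 2) * Y TG2 m 1 (n + 3)
      else Fgen TG2 m i n)"
| "Fy g m i n = Fgen g m i n"

definition a :: "ctype \<Rightarrow> nat \<Rightarrow> nat \<Rightarrow> rat \<Rightarrow> cy" where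
  "a g m i n = Y g m i n * Y g m i (n + di g i) / Fy g m i n"

definition X :: "ctype \<Rightarrow> nat \<Rightarrow> nat \<Rightarrow> rat \<Rightarrow> cy" where
  "X g m i n = inverse (a g m i n)"

definition fy :: "ctype \<Rightarrow> nat \<Rightarrow> nat \<Rightarrow> rat \<Rightarrow> cy" where
  "fy g m i n = 1 + (\<Sum>k = 0..nat \<lfloor>dmax g * of_nat m / di g i\<rfloor> - 2.
                       inverse (\<Prod>t = 0..k. a g m i (n - of_nat t * di g i)))"

definition r_val :: "ctype \<Rightarrow> nat \<Rightarrow> nat \<Rightarrow> rat \<Rightarrow> cy" where
  "r_val g m i n = fy g m i (n - 2 * di g i) / fy g m i (n - di g i)
                   * (Fy g m i (n - di g i) / Y g m i (n - di g i))"

inductive_set subring_gen :: "'a::comm_ring_1 set \<Rightarrow> 'a set" for G where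
  gen: "x \<in> G \<Longrightarrow> x \<in> subring_gen G"
| one: "1 \<in> subring_gen G"
| add: "x \<in> subring_gen G \<Longrightarrow> y \<in> subring_gen G \<Longrightarrow> x + y \<in> subring_gen G"
| neg: "x \<in> subring_gen G \<Longrightarrow> - x \<in> subring_gen G"
| mult: "x \<in> subring_gen G \<Longrightarrow> y \<in> subring_gen G \<Longrightarrow> x * y \<in> subring_gen G"

definition Ychi :: "ctype \<Rightarrow> nat \<Rightarrow> cy set" where
  "Ychi g m = (\<Inter>i\<in>Sset g. subring_gen
      ({Y g m j n | j n. j \<in> Sset g \<and> j \<noteq> i \<and> n \<in> dpts g}
     \<union> {inverse (Y g m j n) | j n. j \<in> Sset g \<and> j \<noteq> i \<and> n \<in> dpts g}
     \<union> {Y g m i n * (1 + X g m i n) | n. n \<in> dpts g}))"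

end

theory Submission
  imports Defs
begin


lemma dmin_val: "valid g \<Longrightarrow> dmin g = (case g of TB _ \<Rightarrow> 1/2 | TF4 \<Rightarrow> 1/2 | _ \<Rightarrow> 1)"
  unfolding dmin_def Sset_def
  apply (rule Min_eqI)
  apply simp
  apply (cases g; auto)
  apply (cases g)
  apply (auto intro: rev_image_eqI[of 1] rev_image_eqI[of 3])
  done

lemma dmax_val: "valid g \<Longrightarrow> dmax g = (case g of TC _ \<Rightarrow> 2 | TG2 \<Rightarrow> 3 | _ \<Rightarrow> 1)"
  unfolding dmax_def Sset_def
  apply (rule Max_eqI)
  apply simp
  apply (cases g; auto)
  apply (cases g)
  apply (auto intro: rev_image_eqI[of 1] rev_image_eqI[of 2])
  done

lemma dmin_pos: "valid g \<Longrightarrow> dmin g > 0"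
  by (cases g) (auto simp: dmin_val)

lemma di_mult: "valid g \<Longrightarrow> \<exists>k::int. di g i = of_int k * dmin g"
  apply (cases g)
  apply (auto simp: dmin_val)
  done

lemma dmax_di: "valid g \<Longrightarrow> i \<in> Sset g \<Longrightarrow> \<exists>c::nat. c \<ge> 1 \<and> dmax g = of_nat c * di g i"
  apply (cases g)
  apply (auto simp: dmax_val Sset_def)
  done

lemma dmax_dmin: "valid g \<Longrightarrow> \<exists>c::nat. c \<ge> 1 \<and> dmax g = of_nat c * dmin g"
  apply (cases g)
  apply (auto simp: dmax_val dmin_val)
  done

lemma qarrow_shift: "qarrow g (i, n + c) (j, n' + c) = qarrow g (i, n) (j, n')"
  by (cases g) auto

lemma qarrow_self: "valid g \<Longrightarrow> qarrow g (i, n) (i, n') \<Longrightarrow> 0 < n' - n \<and> n' - n \<le> dmax g"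
  by (cases g) (auto simp: dmax_val carrow_def)

lemma npts_eq: "valid g \<Longrightarrow> dmax g = of_nat c * dmin g \<Longrightarrow> npts g m = int (c * m)"
proof -
  assume v: "valid g" and c: "dmax g = of_nat c * dmin g"
  have "dmax g * of_nat m / dmin g = of_nat (c * m)" using dmin_pos[OF v] c by simp
  then show ?thesis unfolding npts_def by (simp only: floor_of_nat)
qed

lemma Y_period: assumes "valid g"
  shows "Y g m j (n + of_int k * (dmax g * of_nat m)) = Y g m j n"
proof -
  obtain c :: nat where c: "dmax g = of_nat c * dmin g" using dmax_dmin[OF assms] by blast
  have dp: "dmin g > 0" using dmin_pos[OF assms] .
  have "(n + of_int k * (dmax g * of_nat m)) / dmin g = n / dmin g + of_int (k * int (c * m))"
    using dp by (simp add: c field_simps)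
  then have "\<lfloor>(n + of_int k * (dmax g * of_nat m)) / dmin g\<rfloor> = \<lfloor>n / dmin g\<rfloor> + k * int (c * m)"
    by (simp only: floor_add_int)
  then show ?thesis unfolding Y_def using npts_eq[OF assms c, of m] by simp
qed

lemma Y_reduce: assumes "valid g"
  shows "Y g m j n = Y g m j (of_int \<lfloor>n / dmin g\<rfloor> * dmin g)"
    and "of_int \<lfloor>n / dmin g\<rfloor> * dmin g \<in> dpts g"
  using dmin_pos[OF assms] by (auto simp: Y_def dpts_def)

lemma Qarrow_shift: assumes "valid g" and P: "P = of_int k * (dmax g * of_nat m)"
  shows "Qarrow g m (i, n + P) (j, n + P) = Qarrow g m (i, n) (j, n)"
proof -
  obtain c :: nat where c: "dmax g = of_nat c * dmin g" using dmax_dmin[OF assms(1)] by blast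
  have Pd: "P = of_int (k * int c * int m) * dmin g" using P c by simp
  have d1: "(n + P \<in> dpts g) = (n \<in> dpts g)"
  proof
    assume "n + P \<in> dpts g"
    then obtain k' where "n + P = of_int k' * dmin g" by (auto simp: dpts_def)
    then have "n = of_int (k' - k * int c * int m) * dmin g" using Pd by (simp add: algebra_simps)
    then show "n \<in> dpts g" unfolding dpts_def by blast
  next
    assume "n \<in> dpts g"
    then obtain k' where "n = of_int k' * dmin g" by (auto simp: dpts_def)
    then have "n + P = of_int (k' + k * int c * int m) * dmin g" using Pd by (simp add: algebra_simps)
    then show "n + P \<in> dpts g" unfolding dpts_def by blast
  qed
  have e: "(\<exists>n''. qarrow g (i, n + P) (j, n'') \<and> cong_dm g m n'' (n + P))
         = (\<exists>n''. qarrow g (i, n) (j, n'') \<and> cong_dm g m n'' n)"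
  proof
    assume "\<exists>n''. qarrow g (i, n + P) (j, n'') \<and> cong_dm g m n'' (n + P)"
    then obtain n'' where h: "qarrow g (i, n + P) (j, n'')" "cong_dm g m n'' (n + P)" by blast
    have "qarrow g (i, n) (j, n'' - P)" using h(1) qarrow_shift[of g i n P j "n'' - P"] by simp
    moreover have "cong_dm g m (n'' - P) n" using h(2) by (simp add: cong_dm_def algebra_simps)
    ultimately show "\<exists>n''. qarrow g (i, n) (j, n'') \<and> cong_dm g m n'' n" by blast
  next
    assume "\<exists>n''. qarrow g (i, n) (j, n'') \<and> cong_dm g m n'' n"
    then obtain n'' where h: "qarrow g (i, n) (j, n'')" "cong_dm g m n'' n" by blast
    have "qarrow g (i, n + P) (j, n'' + P)" using h(1) qarrow_shift[of g i n P j n''] by simp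
    moreover have "cong_dm g m (n'' + P) (n + P)" using h(2) by (simp add: cong_dm_def algebra_simps)
    ultimately show "\<exists>n''. qarrow g (i, n + P) (j, n'') \<and> cong_dm g m n'' (n + P)" by blast
  qed
  show ?thesis unfolding Qarrow_def using d1 e by simp
qed

lemma Fy_period: assumes "valid g" and P: "P = of_int k * (dmax g * of_nat m)"
  shows "Fy g m i (n + P) = Fy g m i n"
proof -
  have Y1: "Y g m j (x + P) = Y g m j x" for j x using Y_period[OF assms(1)] P by simp
  have Y2: "Y g m j (x + P + e) = Y g m j (x + e)" for j x e
    using Y1[of j "x + e"] by (simp add: algebra_simps)
  have Y01: "Y0 g m j (x + P) = Y0 g m j x" for j x by (simp add: Y0_def Y1)
  have Y02: "Y0 g m j (x + P + e) = Y0 g m j (x + e)" for j x e by (simp add: Y0_def Y2)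
  have Q: "Qarrow g m (a, n + P) (b, n + P) = Qarrow g m (a, n) (b, n)" for a b
    using Qarrow_shift[OF assms] .
  have F: "Fgen g m i (n + P) = Fgen g m i n"
    unfolding Fgen_def Q Y1 Y2 ..
  show ?thesis
    using F Y01 Y02 Y1 Y2 by (cases g) simp_all
qed

lemma Qarrow_self: assumes "valid g" "m \<ge> 2" shows "\<not> Qarrow g m (i, n) (i, n)"
proof
  assume "Qarrow g m (i, n) (i, n)"
  then obtain n'' k where q: "qarrow g (i, n) (i, n'')" and k: "n'' - n = of_int k * (dmax g * of_nat m)"
    unfolding Qarrow_def cong_dm_def by auto
  have b: "0 < n'' - n" "n'' - n \<le> dmax g" using qarrow_self[OF assms(1) q] by auto
  have dp: "dmax g > 0" using assms(1) by (cases g) (auto simp: dmax_val)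
  have mp: "(of_nat m :: rat) \<ge> 2" using assms(2) by simp
  have "of_int k * (dmax g * of_nat m) > (0::rat)" using b k by simp
  have dm: "dmax g * of_nat m > 0" using dp mp by simp
  then have "of_int k > (0::rat)" using \<open>of_int k * (dmax g * of_nat m) > 0\<close> by (metis zero_less_mult_pos2)
  then have "k \<ge> 1" by simp
  then have "(of_int k :: rat) \<ge> 1" by simp
  then have "of_int k * of_nat m \<ge> (2::rat)" using mult_mono[of 1 "of_int k" 2 "of_nat m :: rat"] mp
    by simp
  then have "(of_int k * of_nat m) * dmax g \<ge> 2 * dmax g" using dp
    by (intro mult_right_mono) auto
  then have "of_int k * (dmax g * of_nat m) \<ge> 2 * dmax g" by (simp add: algebra_simps)
  then show False using b k dp by linarith
qed

definition rhom :: "(cy \<Rightarrow> cy) \<Rightarrow> bool" where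
  "rhom r = ((\<forall>x y. r (x + y) = r x + r y) \<and> (\<forall>x y. r (x * y) = r x * r y) \<and> r 1 = 1)"

lemma rhom_add: "rhom r \<Longrightarrow> r (x + y) = r x + r y" by (simp add: rhom_def)
lemma rhom_mult: "rhom r \<Longrightarrow> r (x * y) = r x * r y" by (simp add: rhom_def)
lemma rhom_one: "rhom r \<Longrightarrow> r 1 = 1" by (simp add: rhom_def)
lemma rhom_zero: "rhom r \<Longrightarrow> r 0 = 0"
proof -
  assume h: "rhom r"
  show ?thesis using rhom_add[OF h, of 0 0] by (metis add.right_neutral add_cancel_right_right)
qed
lemma rhom_neg: "rhom r \<Longrightarrow> r (- x) = - r x"
  using rhom_add[of r x "- x"] rhom_zero[of r] by (metis add.right_inverse minus_unique)
lemma rhom_inv: "rhom r \<Longrightarrow> r (inverse x) = inverse (r x)"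
proof (cases "x = 0")
  case True assume "rhom r" then show ?thesis using True by (simp add: rhom_zero)
next
  case False assume h: "rhom r"
  have "r x * r (inverse x) = 1" using rhom_mult[OF h, of x "inverse x"] rhom_one[OF h] False by simp
  then show ?thesis by (metis inverse_unique)
qed
lemma rhom_div: "rhom r \<Longrightarrow> r (x / y) = r x / r y"
  by (simp add: divide_inverse rhom_mult rhom_inv)
lemma rhom_nz: "rhom r \<Longrightarrow> x \<noteq> 0 \<Longrightarrow> r x \<noteq> 0"
  using rhom_mult[of r x "inverse x"] rhom_one[of r] by auto
lemma rhom_prod: "rhom r \<Longrightarrow> r (prod h A) = (\<Prod>a\<in>A. r (h a))"
proof (induction A rule: infinite_finite_induct)
  case (infinite A) then show ?case by (simp add: rhom_one)
next
  case empty then show ?case by (simp add: rhom_one)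
next
  case (insert x F) then show ?case by (simp add: rhom_mult)
qed


lemma rhom_Fy: assumes r: "rhom r" and v: "valid g" and m: "m \<ge> 2" and i: "i \<in> Sset g"
  and fx: "\<And>j n. j \<in> Sset g \<Longrightarrow> j \<noteq> i \<Longrightarrow> r (Y g m j n) = Y g m j n"
  shows "r (Fy g m i n) = Fy g m i n"
proof -
  have Y0f: "j \<noteq> i \<Longrightarrow> r (Y0 g m j x) = Y0 g m j x" for j x
    using fx rhom_one[OF r] by (simp add: Y0_def)
  have F: "r (Fgen g m i n) = Fgen g m i n"
    unfolding Fgen_def rhom_mult[OF r] rhom_prod[OF r]
  proof (intro arg_cong2[where f = "(*)"] prod.cong refl)
    fix j assume "j \<in> {j \<in> Sset g. Qarrow g m (i, n) (j, n)}"
    then have "j \<in> Sset g" "j \<noteq> i" using Qarrow_self[OF v m] by auto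
    then show "r (Y g m j (n + di g j)) = Y g m j (n + di g j)" using fx by simp
  next
    fix j assume "j \<in> {j \<in> Sset g. Qarrow g m (j, n) (i, n)}"
    then have "j \<in> Sset g" "j \<noteq> i" using Qarrow_self[OF v m] by auto
    then show "r (Y g m j n) = Y g m j n" using fx by simp
  qed
  have i1: "1 \<le> i" using i by (simp add: Sset_def)
  show ?thesis
  proof (cases g)
    case (TB l) show ?thesis using F Y0f i1 unfolding TB by (simp add: rhom_mult[OF r] if_distrib[of r])
  next
    case (TC l) have "l \<ge> 2" using v TC by simp
    then show ?thesis using F Y0f i1 unfolding TC by (simp add: rhom_mult[OF r] if_distrib[of r])
  next
    case TF4 show ?thesis using F Y0f i1 unfolding TF4 by (simp add: rhom_mult[OF r] if_distrib[of r])
  next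
    case TG2 have "i = 2 \<Longrightarrow> r (Y TG2 m 1 x) = Y TG2 m 1 x" for x using fx[of 1] unfolding TG2 by (simp add: Sset_def)
    then show ?thesis using F unfolding TG2 by (cases "i = 2") (simp_all add: rhom_mult[OF r])
  next
    case (TA l) show ?thesis using F unfolding TA by simp
  next
    case (TD l) show ?thesis using F unfolding TD by simp
  next
    case (TE l) show ?thesis using F unfolding TE by simp
  qed
qed



lemma tele:
  fixes u :: "nat \<Rightarrow> 'a::comm_ring_1"
  assumes "u N = u 0"
  shows "u 1 * (\<Sum>k<N. \<Prod>t<k. u (2+t)) + (\<Sum>k<N. \<Prod>t<k. u (0+t))
       = (1 + u 0) * (\<Sum>k<N. \<Prod>t<k. u (1+t))"
proof -
  define q where "q j k = (\<Prod>t<k. u (j+t))" for j k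
  have s: "u j * q (Suc j) k = q j (Suc k)" for j k
    unfolding q_def by (subst prod.lessThan_Suc_shift) simp
  have sh: "(\<Sum>k<N. q j (Suc k)) = (\<Sum>k<N. q j k) - q j 0 + q j N" for j
    by (induction N) auto
  have qN: "q 1 N = q 0 N"
  proof (cases N)
    case 0 then show ?thesis by (simp add: q_def)
  next
    case (Suc M)
    have "q 0 (Suc M) = u 0 * (\<Prod>t<M. u (Suc t))" unfolding q_def by (subst prod.lessThan_Suc_shift) simp
    moreover have "q 1 (Suc M) = (\<Prod>t<M. u (Suc t)) * u (Suc M)" unfolding q_def by simp
    ultimately show ?thesis using assms Suc by (simp add: mult.commute)
  qed
  have "u 1 * (\<Sum>k<N. q 2 k) = (\<Sum>k<N. q 1 (Suc k))"
  proof -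
    have "u 1 * q 2 k = q 1 (Suc k)" for k using s[of 1 k] by (simp add: numeral_2_eq_2)
    then show ?thesis by (simp add: sum_distrib_left)
  qed
  moreover have "u 0 * (\<Sum>k<N. q 1 k) = (\<Sum>k<N. q 0 (Suc k))"
    using s[of 0] by (simp add: sum_distrib_left)
  ultimately have "u 1 * (\<Sum>k<N. q 2 k) + (\<Sum>k<N. q 0 k) = (1 + u 0) * (\<Sum>k<N. q 1 k)"
  proof -
    have e: "q j 0 = 1" for j by (simp add: q_def)
    assume h1: "u 1 * (\<Sum>k<N. q 2 k) = (\<Sum>k<N. q 1 (Suc k))"
      and h2: "u 0 * (\<Sum>k<N. q 1 k) = (\<Sum>k<N. q 0 (Suc k))"
    show ?thesis unfolding h1 distrib_right h2 sh e qN by (simp add: algebra_simps)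
  qed
  then show ?thesis unfolding q_def by simp
qed



lemma key:
  fixes Yn Yn1 Y1 F0 F1 f0 f1 f2 A B :: "'a::field"
  assumes nz: "Yn \<noteq> 0" "Yn1 \<noteq> 0" "Y1 \<noteq> 0" "f1 \<noteq> 0" "f0 \<noteq> 0" "F0 \<noteq> 0" "F1 \<noteq> 0" "f2 \<noteq> 0"
    and A: "A = f2 / f1 * (F1 / Y1)" and B: "B = f1 / f0 * (F0 / Yn)"
    and tel: "F1 / (Y1 * Yn) * f2 + f0 = (1 + F0 / (Yn * Yn1)) * f1"
  shows "A * (1 + inverse (A * B / F0)) = Yn * (1 + inverse (Yn * Yn1 / F0))"
proof -
  have "A * (1 + inverse (A * B / F0)) = (F1 / (Y1 * Yn) * f2 + f0) * Yn / f1"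
    using nz unfolding A B by (simp add: field_simps)
  also have "\<dots> = Yn * (1 + inverse (Yn * Yn1 / F0))"
    unfolding tel using nz by (simp add: field_simps)
  finally show ?thesis .
qed

lemma di_pos: "valid g \<Longrightarrow> di g i > 0"
  by (cases g) auto

lemma Nfacts: assumes "valid g" "i \<in> Sset g" "m \<ge> 2"
  shows "nat \<lfloor>dmax g * of_nat m / di g i\<rfloor> \<ge> 2"
    and "of_nat (nat \<lfloor>dmax g * of_nat m / di g i\<rfloor>) * di g i = dmax g * of_nat m"
proof -
  obtain c :: nat where c: "c \<ge> 1" "dmax g = of_nat c * di g i" using dmax_di[OF assms(1,2)] by blast
  have dp: "di g i > 0" using di_pos[OF assms(1)] .
  have e: "dmax g * of_nat m / di g i = of_nat (c * m)" using c dp by simp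
  have cm: "c * m \<ge> 2" using c assms(3) by (metis mult_le_mono nat_mult_1)
  show "nat \<lfloor>dmax g * of_nat m / di g i\<rfloor> \<ge> 2" unfolding e floor_of_nat nat_int using cm by simp
  show "of_nat (nat \<lfloor>dmax g * of_nat m / di g i\<rfloor>) * di g i = dmax g * of_nat m"
    unfolding e floor_of_nat nat_int using c by simp
qed

lemma fy_conv: assumes "N = nat \<lfloor>dmax g * of_nat m / di g i\<rfloor>" "N \<ge> 2"
  shows "fy g m i (n - of_nat j * di g i) = (\<Sum>k<N. \<Prod>t<k. X g m i (n - of_nat (j + t) * di g i))"
proof -
  define h where "h k = (\<Prod>t<k. X g m i (n - of_nat (j + t) * di g i))" for k
  have "fy g m i (n - of_nat j * di g i) = 1 + (\<Sum>k<N - 1. h (Suc k))"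
    unfolding fy_def assms(1)[symmetric]
  proof (intro arg_cong2[where f = "(+)"] refl sum.cong)
    show "{0..N - 2} = {..<N - 1}" using assms(2) by auto
  next
    fix k assume "k \<in> {..<N - 1}"
    have "inverse (\<Prod>t = 0..k. a g m i (n - of_nat j * di g i - of_nat t * di g i))
        = (\<Prod>t = 0..k. inverse (a g m i (n - of_nat j * di g i - of_nat t * di g i)))"
      by (simp add: prod_inversef[symmetric] o_def)
    also have "\<dots> = h (Suc k)" unfolding h_def X_def
      by (intro prod.cong) (auto simp: algebra_simps atLeast0AtMost lessThan_Suc_atMost)
    finally show "inverse (\<Prod>t = 0..k. a g m i (n - of_nat j * di g i - of_nat t * di g i)) = h (Suc k)" .
  qed
  also have "\<dots> = (\<Sum>k<Suc (N - 1). h k)"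
    by (subst sum.lessThan_Suc_shift) (simp add: h_def)
  also have "Suc (N - 1) = N" using assms(2) by simp
  finally show ?thesis unfolding h_def .
qed



lemma single_nz: "Poly_Mapping.single k (1::'b::zero_neq_one) \<noteq> 0"
  by (metis lookup_single_eq lookup_zero one_neq_zero)

lemma Y_nz: "Y g m i n \<noteq> 0"
  unfolding Y_def Zero_fract_def
  by (subst eq_fract(1)) (auto simp: single_nz)

lemma X_period: assumes "valid g" "i \<in> Sset g" "m \<ge> 2" "N = nat \<lfloor>dmax g * of_nat m / di g i\<rfloor>"
  shows "X g m i (n - of_nat N * di g i) = X g m i n"
proof -
  define P :: rat where "P = of_int (-1) * (dmax g * of_nat m)"
  have e: "n - of_nat N * di g i = n + P" using Nfacts(2)[OF assms(1-3)] assms(4) by (simp add: P_def)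
  have e2: "n + P + di g i = (n + di g i) + P" by simp
  have Y1: "Y g m j (x + P) = Y g m j x" for j x unfolding P_def by (rule Y_period[OF assms(1)])
  have F1: "Fy g m i (x + P) = Fy g m i x" for x by (rule Fy_period[OF assms(1) P_def])
  show ?thesis unfolding X_def a_def e e2 Y1 F1 ..
qed

lemma main_gen:
  assumes r: "rhom r" and v: "valid g" and m: "m \<ge> 2" and i: "i \<in> Sset g" and n: "n \<in> dpts g"
    and hY: "\<forall>n\<in>dpts g. r (Y g m i n) = r_val g m i n"
    and fx: "\<And>j n. j \<in> Sset g \<Longrightarrow> j \<noteq> i \<Longrightarrow> r (Y g m j n) = Y g m j n"
  shows "r (Y g m i n * (1 + X g m i n)) = Y g m i n * (1 + X g m i n)"
proof -
  define d where "d = di g i"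
  define N where "N = nat \<lfloor>dmax g * of_nat m / di g i\<rfloor>"
  have N2: "N \<ge> 2" using Nfacts(1)[OF v i m] N_def by simp
  have nd: "n + d \<in> dpts g"
  proof -
    obtain k where k: "di g i = of_int k * dmin g" using di_mult[OF v] by blast
    obtain k' where k': "n = of_int k' * dmin g" using n by (auto simp: dpts_def)
    have "n + d = of_int (k' + k) * dmin g" using k k' d_def by (simp add: algebra_simps)
    then show ?thesis unfolding dpts_def by blast
  qed
  define u where "u k = X g m i (n - of_nat k * d)" for k
  have uN: "u N = u 0" unfolding u_def d_def using X_period[OF v i m N_def] by simp
  have T: "(\<Sum>k<N. \<Prod>t<k. u (j + t)) = fy g m i (n - of_nat j * d)" for j
    unfolding u_def d_def using fy_conv[OF N_def N2] by simp
  have tl: "u 1 * fy g m i (n - 2 * d) + fy g m i n = (1 + u 0) * fy g m i (n - d)"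
    using tele[of u N, OF uN] T[of 2] T[of 0] T[of 1] by simp
  have FF: "r (Fy g m i x) = Fy g m i x" for x using rhom_Fy[OF r v m i fx] by blast
  have rY: "r (Y g m i n) = fy g m i (n - 2 * d) / fy g m i (n - d) * (Fy g m i (n - d) / Y g m i (n - d))"
    using hY n unfolding r_val_def d_def by simp
  have rY1: "r (Y g m i (n + d)) = fy g m i (n - d) / fy g m i n * (Fy g m i n / Y g m i n)"
  proof -
    have "r (Y g m i (n + d)) = r_val g m i (n + d)" using hY nd d_def by simp
    moreover have "n + d - 2 * d = n - d" "n + d - d = n" by simp_all
    ultimately show ?thesis unfolding r_val_def d_def by simp
  qed
  have nz1: "r (Y g m i n) \<noteq> 0" using rhom_nz[OF r Y_nz] .
  have nz2: "r (Y g m i (n + d)) \<noteq> 0" using rhom_nz[OF r Y_nz] .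
  have nzs: "fy g m i (n - 2 * d) \<noteq> 0" "fy g m i (n - d) \<noteq> 0" "Fy g m i (n - d) \<noteq> 0"
    using nz1 unfolding rY by auto
  have nzs2: "fy g m i n \<noteq> 0" "Fy g m i n \<noteq> 0"
    using nz2 unfolding rY1 by auto
  have lhs: "r (Y g m i n * (1 + X g m i n))
     = r (Y g m i n) * (1 + inverse (r (Y g m i n) * r (Y g m i (n + d)) / Fy g m i n))"
    unfolding X_def a_def d_def
    by (simp add: rhom_mult[OF r] rhom_add[OF r] rhom_one[OF r] rhom_inv[OF r] rhom_div[OF r] FF)
  have u1: "u 1 = Fy g m i (n - d) / (Y g m i (n - d) * Y g m i n)"
    unfolding u_def X_def a_def d_def by simp
  have u0: "u 0 = Fy g m i n / (Y g m i n * Y g m i (n + d))"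
    unfolding u_def X_def a_def d_def by simp
  show ?thesis unfolding lhs
    apply (subst X_def, subst a_def, fold d_def)
    apply (rule key[OF Y_nz Y_nz Y_nz nzs(2) nzs2(1) nzs2(2) nzs(3) nzs(1) rY rY1])
    using tl unfolding u1 u0 by (simp add: mult.commute)
qed


theorem proposition4p13:
  fixes g :: ctype and m :: nat and i :: nat and r :: "cy \<Rightarrow> cy" and f :: cy
  assumes "valid g" and "m > 1" and "int m > int (rank g) - 1"
    and "i \<in> Sset g"
    and "\<forall>x y. r (x + y) = r x + r y"
    and "\<forall>x y. r (x * y) = r x * r y"
    and "r 1 = 1"
    and "\<forall>c. r (const c) = const c"
    and "\<forall>n\<in>dpts g. r (Y g m i n) = r_val g m i n"
    and "\<forall>j\<in>Sset g. j \<noteq> i \<longrightarrow> (\<forall>n\<in>dpts g. r (Y g m j n) = Y g m j n)"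
    and "f \<in> Ychi g m"
  shows "r f = f"
proof -
  have r: "rhom r" using assms(5,6,7) unfolding rhom_def by blast
  have v: "valid g" by (rule assms(1))
  have m2: "m \<ge> 2" using assms(2) by simp
  have fx: "r (Y g m j n) = Y g m j n" if j: "j \<in> Sset g" "j \<noteq> i" for j n
  proof -
    have e: "Y g m j n = Y g m j (of_int \<lfloor>n / dmin g\<rfloor> * dmin g)" by (rule Y_reduce(1)[OF v])
    show ?thesis unfolding e using assms(10) Y_reduce(2)[OF v, of n] j by blast
  qed
  have "f \<in> subring_gen
      ({Y g m j n | j n. j \<in> Sset g \<and> j \<noteq> i \<and> n \<in> dpts g}
     \<union> {inverse (Y g m j n) | j n. j \<in> Sset g \<and> j \<noteq> i \<and> n \<in> dpts g}
     \<union> {Y g m i n * (1 + X g m i n) | n. n \<in> dpts g})"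
    using assms(11) assms(4) unfolding Ychi_def by blast
  then show "r f = f"
  proof (induction rule: subring_gen.induct)
    case (gen x)
    then show ?case
      using fx rhom_inv[OF r] main_gen[OF r v m2 assms(4) _ assms(9) fx] by auto
  next
    case one then show ?case by (rule rhom_one[OF r])
  next
    case (add x y) then show ?case by (simp add: rhom_add[OF r])
  next
    case (neg x) then show ?case by (simp add: rhom_neg[OF r])
  next
    case (mult x y) then show ?case by (simp add: rhom_mult[OF r])
  qed
qed


end
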